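(* Let $A$ be a sequence algebra and $X$ an essential homogeneous normed $A$-module with completion $\overline X$. Then for every $x\in\overline X$ there exist $\bar x\in\overline X$ and real numbers $\lambda_n\ge1$ with $\lambda_n\to\infty$ such that $\bar x_n=\lambda_nx_n$ for all $n\in\mathbb N$.
   Context: Modules are contractive ($\|a\cdot x\|\le\|a\|\|x\|$). A sequence algebra is a normed algebra of complex sequences with coordinatewise operations containing $c_{00}$ as a dense subalgebra, with $\|\mathbf p^n\|=1$, where $\mathbf p^n$ has $1$ in place $n$ and $0$ elsewhere. For $x$ in a module, $x_n:=\mathbf p^n\cdot x$. $X$ is essential if the closed linear span of $\{a\cdot x\}$ is $X$; homogeneous if $\|x_n\|\le\|y_n\|$ for all $n$ implies $\|x\|\le\|y\|$. *)

theory Defs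
  imports "HOL-Analysis.Analysis"
begin

definition pvec :: "nat \<Rightarrow> (nat \<Rightarrow> complex)" where
  "pvec n = (\<lambda>k. if k = n then 1 else 0)"

definition c00 :: "(nat \<Rightarrow> complex) set" where
  "c00 = {a. finite {n. a n \<noteq> 0}}"

definition seq_algebra :: "(nat \<Rightarrow> complex) set \<Rightarrow> ((nat \<Rightarrow> complex) \<Rightarrow> real) \<Rightarrow> bool" where
  "seq_algebra A N \<longleftrightarrow>
     (\<forall>a\<in>A. \<forall>b\<in>A. (\<lambda>n. a n + b n) \<in> A \<and> (\<lambda>n. a n * b n) \<in> A) \<and>
     (\<forall>c. \<forall>a\<in>A. (\<lambda>n. c * a n) \<in> A) \<and>
     (\<forall>a\<in>A. 0 \<le> N a \<and> (N a = 0 \<longleftrightarrow> a = (\<lambda>n. 0))) \<and>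
     (\<forall>a\<in>A. \<forall>b\<in>A. N (\<lambda>n. a n + b n) \<le> N a + N b) \<and>
     (\<forall>c. \<forall>a\<in>A. N (\<lambda>n. c * a n) = cmod c * N a) \<and>
     (\<forall>a\<in>A. \<forall>b\<in>A. N (\<lambda>n. a n * b n) \<le> N a * N b) \<and>
     c00 \<subseteq> A \<and>
     (\<forall>a\<in>A. \<forall>e>0. \<exists>b\<in>c00. N (\<lambda>n. a n - b n) < e) \<and>
     (\<forall>n. N (pvec n) = 1)"

text \<open>A complex Banach space structure on a real Banach space type: sc is a complex
  scalar multiplication extending the real one and compatible with the norm.\<close>
definition complex_scalar :: "(complex \<Rightarrow> 'x::banach \<Rightarrow> 'x) \<Rightarrow> bool" where
  "complex_scalar sc \<longleftrightarrow>
     (\<forall>r x. sc (complex_of_real r) x = r *\<^sub>R x) \<and>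
     (\<forall>c d x. sc (c * d) x = sc c (sc d x)) \<and>
     (\<forall>c d x. sc (c + d) x = sc c x + sc d x) \<and>
     (\<forall>c x y. sc c (x + y) = sc c x + sc c y) \<and>
     (\<forall>c x. norm (sc c x) = cmod c * norm x)"

definition cplx_span :: "(complex \<Rightarrow> 'x::banach \<Rightarrow> 'x) \<Rightarrow> 'x set \<Rightarrow> 'x set" where
  "cplx_span sc M = {(\<Sum>i<k. sc (c i) (v i)) | (k::nat) c v. \<forall>i<k. v i \<in> M}"

definition contractive_module ::
  "(nat \<Rightarrow> complex) set \<Rightarrow> ((nat \<Rightarrow> complex) \<Rightarrow> real) \<Rightarrow> (complex \<Rightarrow> 'x::banach \<Rightarrow> 'x)
    \<Rightarrow> ((nat \<Rightarrow> complex) \<Rightarrow> 'x \<Rightarrow> 'x) \<Rightarrow> bool" where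
  "contractive_module A N sc act \<longleftrightarrow>
     (\<forall>a\<in>A. \<forall>b\<in>A. \<forall>x. act (\<lambda>n. a n + b n) x = act a x + act b x) \<and>
     (\<forall>a\<in>A. \<forall>c x. act (\<lambda>n. c * a n) x = sc c (act a x)) \<and>
     (\<forall>a\<in>A. \<forall>x y. act a (x + y) = act a x + act a y) \<and>
     (\<forall>a\<in>A. \<forall>c x. act a (sc c x) = sc c (act a x)) \<and>
     (\<forall>a\<in>A. \<forall>b\<in>A. \<forall>x. act (\<lambda>n. a n * b n) x = act a (act b x)) \<and>
     (\<forall>a\<in>A. \<forall>x. norm (act a x) \<le> N a * norm x)"

definition submodule ::
  "(nat \<Rightarrow> complex) set \<Rightarrow> (complex \<Rightarrow> 'x::banach \<Rightarrow> 'x)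
    \<Rightarrow> ((nat \<Rightarrow> complex) \<Rightarrow> 'x \<Rightarrow> 'x) \<Rightarrow> 'x set \<Rightarrow> bool" where
  "submodule A sc act X \<longleftrightarrow>
     0 \<in> X \<and> (\<forall>x\<in>X. \<forall>y\<in>X. x + y \<in> X) \<and> (\<forall>c. \<forall>x\<in>X. sc c x \<in> X) \<and>
     (\<forall>a\<in>A. \<forall>x\<in>X. act a x \<in> X)"

definition essential ::
  "(nat \<Rightarrow> complex) set \<Rightarrow> (complex \<Rightarrow> 'x::banach \<Rightarrow> 'x)
    \<Rightarrow> ((nat \<Rightarrow> complex) \<Rightarrow> 'x \<Rightarrow> 'x) \<Rightarrow> 'x set \<Rightarrow> bool" where
  "essential A sc act X \<longleftrightarrow>
     closure (cplx_span sc {act a x | a x. a \<in> A \<and> x \<in> X}) \<inter> X = X"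

definition homogeneous ::
  "((nat \<Rightarrow> complex) \<Rightarrow> 'x::banach \<Rightarrow> 'x) \<Rightarrow> 'x set \<Rightarrow> bool" where
  "homogeneous act X \<longleftrightarrow>
     (\<forall>x\<in>X. \<forall>y\<in>X. (\<forall>n. norm (act (pvec n) x) \<le> norm (act (pvec n) y)) \<longrightarrow> norm x \<le> norm y)"

end

theory Submission
  imports Defs
begin

theorem proposition1p7:
  fixes A :: "(nat \<Rightarrow> complex) set" and N :: "(nat \<Rightarrow> complex) \<Rightarrow> real"
    and sc :: "complex \<Rightarrow> 'x::banach \<Rightarrow> 'x"
    and act :: "(nat \<Rightarrow> complex) \<Rightarrow> 'x \<Rightarrow> 'x"
    and X :: "'x set"
  assumes "seq_algebra A N"
    and "complex_scalar sc"
    and "contractive_module A N sc act"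
    and "submodule A sc act X"
    and "closure X = UNIV"
    and "essential A sc act X"
    and "homogeneous act X"
  shows "\<forall>x. \<exists>xb lam. (\<forall>n. lam n \<ge> (1::real)) \<and> filterlim lam at_top sequentially \<and>
           (\<forall>n. act (pvec n) xb = lam n *\<^sub>R act (pvec n) x)"
proof -
  note sa = assms(1)[unfolded seq_algebra_def]
  have Aadd: "\<And>a b. a\<in>A \<Longrightarrow> b\<in>A \<Longrightarrow> (\<lambda>n. a n + b n) \<in> A" using sa by blast
  have Asc: "\<And>c a. a\<in>A \<Longrightarrow> (\<lambda>n. c * a n) \<in> A" using sa by blast
  have Nnn: "\<And>a. a\<in>A \<Longrightarrow> 0 \<le> N a" using sa by blast
  have c00A: "c00 \<subseteq> A" using sa by blast
  have dense: "\<And>a e. a\<in>A \<Longrightarrow> e>0 \<Longrightarrow> \<exists>b\<in>c00. N (\<lambda>n. a n - b n) < e" using sa by blast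
  note cs = assms(2)[unfolded complex_scalar_def]
  have sc_real: "\<And>r x. sc (complex_of_real r) x = r *\<^sub>R x" using cs by blast
  note cm = assms(3)[unfolded contractive_module_def]
  have act_addA: "\<And>a b x. a\<in>A \<Longrightarrow> b\<in>A \<Longrightarrow> act (\<lambda>n. a n + b n) x = act a x + act b x" using cm by blast
  have act_sc: "\<And>a c x. a\<in>A \<Longrightarrow> act (\<lambda>n. c * a n) x = sc c (act a x)" using cm by blast
  have act_add: "\<And>a x y. a\<in>A \<Longrightarrow> act a (x + y) = act a x + act a y" using cm by blast
  have act_comm_sc: "\<And>a c x. a\<in>A \<Longrightarrow> act a (sc c x) = sc c (act a x)" using cm by blast
  have act_mul: "\<And>a b x. a\<in>A \<Longrightarrow> b\<in>A \<Longrightarrow> act (\<lambda>n. a n * b n) x = act a (act b x)" using cm by blast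
  have act_bd: "\<And>a x. a\<in>A \<Longrightarrow> norm (act a x) \<le> N a * norm x" using cm by blast
  note sm = assms(4)[unfolded submodule_def]
  have X_act: "\<And>a x. a\<in>A \<Longrightarrow> x\<in>X \<Longrightarrow> act a x \<in> X" using sm by blast
  have hom: "\<And>x y. x\<in>X \<Longrightarrow> y\<in>X \<Longrightarrow> (\<forall>n. norm (act (pvec n) x) \<le> norm (act (pvec n) y)) \<Longrightarrow> norm x \<le> norm y"
    using assms(7) unfolding homogeneous_def by blast
  have bl: "bounded_linear (act a)" if a: "a\<in>A" for a
  proof (rule bounded_linear_intro)
    fix x y show "act a (x + y) = act a x + act a y" using act_add[OF a] .
  next
    fix r x show "act a (r *\<^sub>R x) = r *\<^sub>R act a x"
      using act_comm_sc[OF a, of "complex_of_real r" x] sc_real by simp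
  next
    fix x show "norm (act a x) \<le> norm x * N a" using act_bd[OF a] by (metis mult.commute)
  qed
  have act_diff: "act a (x - y) = act a x - act a y" if "a\<in>A" for a x y
    using linear_diff[OF bounded_linear.linear[OF bl[OF that]]] .
  have pvecA: "pvec n \<in> A" for n
    using c00A unfolding c00_def pvec_def by auto
  have act_zero: "act (\<lambda>_. 0) z = 0" for z
  proof -
    have "act (\<lambda>n. 0 * pvec 0 n) z = sc 0 (act (pvec 0) z)" using act_sc[OF pvecA] .
    also have "\<dots> = 0" using sc_real[of 0] by simp
    finally show ?thesis by simp
  qed
  define e where "e m = (\<lambda>j::nat. if j < m then (1::complex) else 0)" for m :: nat
  have eA: "e m \<in> A" for m
  proof -
    have "{n. e m n \<noteq> 0} = {..<m}" by (auto simp: e_def)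
    then show ?thesis using c00A unfolding c00_def by auto
  qed
  have pT: "act (pvec n) (act (e m) z) = (if n < m then act (pvec n) z else 0)" for n m z
  proof -
    have pe: "(\<lambda>j. pvec n j * e m j) = (if n < m then pvec n else (\<lambda>_. 0))"
      by (auto simp: pvec_def e_def)
    show ?thesis using act_mul[OF pvecA eA, of n m z] unfolding pe by (cases "n<m") (simp_all add: act_zero)
  qed
  have contrX: "norm (act (e m) y) \<le> norm y" if y: "y \<in> X" for m y
  proof (rule hom)
    show "act (e m) y \<in> X" using X_act[OF eA y] .
    show "y \<in> X" by fact
    show "\<forall>n. norm (act (pvec n) (act (e m) y)) \<le> norm (act (pvec n) y)"
      using pT by simp
  qed
  have contr: "norm (act (e m) z) \<le> norm z" for m z
  proof (rule field_le_epsilon)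
    fix d :: real assume d: "d > 0"
    define K where "K = N (e m)"
    have K0: "K \<ge> 0" using Nnn[OF eA] K_def by simp
    have "z \<in> closure X" using assms(5) by simp
    moreover have "d / (1 + K) > 0" using d K0 by simp
    ultimately obtain y where y: "y \<in> X" "dist y z < d / (1 + K)"
      unfolding closure_approachable by blast
    have nzy: "norm (z - y) * (1 + K) < d" using y(2) K0
      by (simp add: dist_norm norm_minus_commute pos_less_divide_eq)
    have "act (e m) z = act (e m) y + act (e m) (z - y)" using act_diff[OF eA] by simp
    then have t1: "norm (act (e m) z) \<le> norm (act (e m) y) + norm (act (e m) (z - y))"
      using norm_triangle_ineq by metis
    have t2: "norm (act (e m) y) \<le> norm y" using contrX[OF y(1)] .
    have t3: "norm (act (e m) (z - y)) \<le> K * norm (z - y)" using act_bd[OF eA] K_def by simp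
    have t4: "norm y \<le> norm z + norm (z - y)" using norm_triangle_ineq[of z "y - z"]
      by (simp add: norm_minus_commute)
    show "norm (act (e m) z) \<le> norm z + d" using t1 t2 t3 t4 nzy by (simp add: algebra_simps)
  qed
  define Q where "Q z \<longleftrightarrow> (\<forall>\<epsilon>>0. \<exists>M. \<forall>m\<ge>M. norm (z - act (e m) z) < \<epsilon>)" for z
  have Q0: "Q 0" unfolding Q_def using linear_0[OF bounded_linear.linear[OF bl[OF eA]]] by auto
  have Qadd: "Q (u + v)" if uv: "Q u" "Q v" for u v
    unfolding Q_def
  proof (intro allI impI)
    fix \<epsilon> :: real assume "\<epsilon> > 0"
    then have "\<epsilon>/2 > 0" by simp
    then obtain M1 M2 where M1: "\<forall>m\<ge>M1. norm (u - act (e m) u) < \<epsilon>/2"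
      and M2: "\<forall>m\<ge>M2. norm (v - act (e m) v) < \<epsilon>/2" using uv \<open>\<epsilon>/2 > 0\<close> unfolding Q_def by meson
    show "\<exists>M. \<forall>m\<ge>M. norm (u + v - act (e m) (u + v)) < \<epsilon>"
    proof (intro exI allI impI)
      fix m assume "max M1 M2 \<le> m"
      then have a: "norm (u - act (e m) u) < \<epsilon>/2" "norm (v - act (e m) v) < \<epsilon>/2" using M1 M2 by auto
      have "u + v - act (e m) (u + v) = (u - act (e m) u) + (v - act (e m) v)"
        using act_add[OF eA] by simp
      then have "norm (u + v - act (e m) (u + v)) \<le> norm (u - act (e m) u) + norm (v - act (e m) v)"
        by (metis norm_triangle_ineq)
      then show "norm (u + v - act (e m) (u + v)) < \<epsilon>" using a by simp
    qed
  qed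
  have Qact: "Q (act a y)" if a: "a \<in> A" for a y
    unfolding Q_def
  proof (intro allI impI)
    fix \<epsilon> :: real assume ep: "\<epsilon> > 0"
    define \<delta> where "\<delta> = \<epsilon> / (2 * (norm y + 1))"
    have dp: "\<delta> > 0" using ep by (simp add: \<delta>_def add_nonneg_pos)
    obtain b where b: "b \<in> c00" "N (\<lambda>n. a n - b n) < \<delta>" using dense[OF a dp] by blast
    have "finite {n. b n \<noteq> 0}" using b(1) unfolding c00_def by simp
    then obtain M where M: "\<And>n. b n \<noteq> 0 \<Longrightarrow> n < M" by (auto simp: finite_nat_set_iff_bounded)
    have bA: "b \<in> A" using b(1) c00A by auto
    define d where "d = (\<lambda>n. a n - b n)"
    have "(\<lambda>n. a n + (\<lambda>n. (-1) * b n) n) \<in> A" using Aadd[OF a Asc[OF bA]] .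
    moreover have "(\<lambda>n. a n + (\<lambda>n. (-1) * b n) n) = d" by (auto simp: d_def)
    ultimately have dA: "d \<in> A" by simp
    have ad: "a = (\<lambda>n. b n + d n)" by (auto simp: d_def)
    have aeq: "act a y = act b y + act d y" using act_addA[OF bA dA] ad by metis
    show "\<exists>M. \<forall>m\<ge>M. norm (act a y - act (e m) (act a y)) < \<epsilon>"
    proof (intro exI allI impI)
      fix m assume mM: "M \<le> m"
      have eb: "(\<lambda>j. e m j * b j) = b" using M mM by (force simp: e_def)
      have Tb: "act (e m) (act b y) = act b y" using act_mul[OF eA bA, of m y] eb by simp
      have "act a y - act (e m) (act a y) = act d y - act (e m) (act d y)"
        using aeq act_add[OF eA] Tb by simp
      then have "norm (act a y - act (e m) (act a y)) \<le> norm (act d y) + norm (act (e m) (act d y))"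
        by (metis norm_triangle_ineq4)
      also have "\<dots> \<le> 2 * norm (act d y)" using contr by simp
      also have "\<dots> \<le> 2 * (N d * norm y)" using act_bd[OF dA] by simp
      also have "\<dots> \<le> 2 * (\<delta> * norm y)" using b(2) d_def by (simp add: mult_right_mono)
      also have "\<dots> < \<epsilon>"
      proof -
        have np: "norm y + 1 > 0" by (simp add: add_nonneg_pos)
        have "2 * (\<delta> * norm y) * (norm y + 1) = \<epsilon> * norm y" using np by (simp add: \<delta>_def field_simps)
        also have "\<dots> < \<epsilon> * (norm y + 1)" using ep by simp
        finally show ?thesis using np by (meson mult_less_cancel_right_pos)
      qed
      finally show "norm (act a y - act (e m) (act a y)) < \<epsilon>" .
    qed
  qed
  define S where "S = {act a x | a x. a \<in> A \<and> x \<in> X}"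
  have Qspan: "Q w" if wsp: "w \<in> cplx_span sc S" for w
  proof -
    obtain k :: nat and c v where w: "w = (\<Sum>i<k. sc (c i) (v i))" and v: "\<forall>i<k. v i \<in> S"
      using wsp unfolding cplx_span_def by blast
    have "\<forall>i<k. Q (sc (c i) (v i))"
    proof (intro allI impI)
      fix i assume "i < k"
      then obtain a y where "a \<in> A" "v i = act a y" using v S_def by blast
      then show "Q (sc (c i) (v i))" using Qact[OF Asc] act_sc by metis
    qed
    then show ?thesis unfolding w
    proof (induct k)
      case 0 then show ?case using Q0 by simp
    next
      case (Suc k) then show ?case using Qadd by simp
    qed
  qed
  have Qall: "Q z" for z
  proof -
    have "X \<subseteq> closure (cplx_span sc S)" using assms(6) unfolding essential_def S_def by blast
    then have "closure X \<subseteq> closure (cplx_span sc S)" by (simp add: closure_minimal)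
    then have zc: "z \<in> closure (cplx_span sc S)" using assms(5) by auto
    show ?thesis unfolding Q_def
    proof (intro allI impI)
      fix \<epsilon> :: real assume ep: "\<epsilon> > 0"
      then obtain w where w: "w \<in> cplx_span sc S" "dist w z < \<epsilon>/3"
        using zc closure_approachable by (metis zero_less_divide_iff zero_less_numeral)
      obtain M where M: "\<forall>m\<ge>M. norm (w - act (e m) w) < \<epsilon>/3"
        using Qspan[OF w(1)] ep unfolding Q_def by (meson zero_less_divide_iff zero_less_numeral)
      show "\<exists>M. \<forall>m\<ge>M. norm (z - act (e m) z) < \<epsilon>"
      proof (intro exI allI impI)
        fix m assume "M \<le> m"
        then have a: "norm (w - act (e m) w) < \<epsilon>/3" using M by auto
        have nzw: "norm (z - w) < \<epsilon>/3" using w(2) by (simp add: dist_norm norm_minus_commute)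
        have eq: "z - act (e m) z = (z - w) + (w - act (e m) w) + act (e m) (w - z)"
          using act_diff[OF eA] by simp
        have "norm (z - act (e m) z) \<le> norm (z - w) + norm (w - act (e m) w) + norm (act (e m) (w - z))"
          unfolding eq by (metis norm_triangle_ineq add_right_mono order_trans)
        also have "norm (act (e m) (w - z)) \<le> norm (z - w)"
          using contr[of m "w - z"] by (simp add: norm_minus_commute)
        finally show "norm (z - act (e m) z) < \<epsilon>" using a nzw by simp
      qed
    qed
  qed
  show ?thesis
  proof
    fix x
    have "\<forall>k. \<exists>m. m \<ge> Suc k \<and> norm (x - act (e m) x) < (1/2)^k"
    proof
      fix k
      obtain M where M: "\<forall>m\<ge>M. norm (x - act (e m) x) < (1/2)^k"
        using Qall[of x] unfolding Q_def by (meson zero_less_divide_iff zero_less_numeral zero_less_one zero_less_power)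
      show "\<exists>m. m \<ge> Suc k \<and> norm (x - act (e m) x) < (1/2)^k"
        using M by (intro exI[of _ "max M (Suc k)"]) auto
    qed
    then obtain mm where mm: "\<And>k. mm k \<ge> Suc k" "\<And>k. norm (x - act (e (mm k)) x) < (1/2)^k"
      by metis
    define y where "y k = x - act (e (mm k)) x" for k
    have sn: "summable (\<lambda>k. norm (y k))"
    proof (rule summable_comparison_test[of _ "\<lambda>k. (1/2::real)^k"])
      show "\<exists>N. \<forall>n\<ge>N. norm (norm (y n)) \<le> (1/2)^n" using mm(2) y_def by (auto intro: less_imp_le)
      show "summable (\<lambda>k. (1/2::real)^k)" by (simp add: summable_geometric)
    qed
    have sy: "summable y" using summable_norm_cancel[OF sn] .
    define lam where "lam n = 1 + real (card {k. mm k \<le> n})" for n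
    have fin: "finite {k. mm k \<le> n}" for n
    proof -
      have "{k. mm k \<le> n} \<subseteq> {..<n}" proof
        fix k assume "k \<in> {k. mm k \<le> n}"
        then have "Suc k \<le> n" using mm(1)[of k] by simp
        then show "k \<in> {..<n}" by simp
      qed
      then show ?thesis using finite_subset by blast
    qed
    show "\<exists>xb lam. (\<forall>n. lam n \<ge> (1::real)) \<and> filterlim lam at_top sequentially \<and>
           (\<forall>n. act (pvec n) xb = lam n *\<^sub>R act (pvec n) x)"
    proof (intro exI conjI allI)
      fix n show "lam n \<ge> 1" by (simp add: lam_def)
    next
      show "filterlim lam at_top sequentially"
        unfolding filterlim_at_top
      proof
        fix Z :: real
        define K where "K = nat \<lceil>Z\<rceil>"
        show "eventually (\<lambda>n. Z \<le> lam n) sequentially"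
          unfolding eventually_sequentially
        proof (intro exI allI impI)
          fix n assume n: "(\<Sum>k<K. mm k) \<le> n"
          have "{..<K} \<subseteq> {k. mm k \<le> n}"
          proof
            fix k assume "k \<in> {..<K}"
            then have "mm k \<le> (\<Sum>k<K. mm k)" by (intro member_le_sum) auto
            then show "k \<in> {k. mm k \<le> n}" using n by simp
          qed
          then have "K \<le> card {k. mm k \<le> n}" using card_mono[OF fin[of n]] by (metis card_lessThan)
          then have "real K \<le> real (card {k. mm k \<le> n})" by simp
          moreover have "Z \<le> real K" unfolding K_def by (rule real_nat_ceiling_ge)
          ultimately show "Z \<le> lam n" unfolding lam_def by linarith
        qed
      qed
    next
      fix n
      define px where "px = act (pvec n) x"
      have py: "act (pvec n) (y k) = (if mm k \<le> n then px else 0)" for k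
      proof -
        have "act (pvec n) (y k) = px - act (pvec n) (act (e (mm k)) x)"
          unfolding y_def px_def by (rule act_diff[OF pvecA])
        then show ?thesis using pT[of n "mm k" x] px_def by (cases "n < mm k") auto
      qed
      have "act (pvec n) (x + suminf y) = px + (\<Sum>k. act (pvec n) (y k))"
        using act_add[OF pvecA] bounded_linear.suminf[OF bl[OF pvecA] sy] px_def by simp
      also have "(\<Sum>k. act (pvec n) (y k)) = (\<Sum>k\<in>{k. mm k \<le> n}. act (pvec n) (y k))"
        by (rule suminf_finite[OF fin]) (simp add: py)
      also have "\<dots> = (\<Sum>k\<in>{k. mm k \<le> n}. px)" by (rule sum.cong) (auto simp: py)
      also have "\<dots> = real (card {k. mm k \<le> n}) *\<^sub>R px" by (simp add: sum_constant_scaleR)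
      finally show "act (pvec n) (x + suminf y) = lam n *\<^sub>R act (pvec n) x"
        unfolding lam_def px_def by (simp add: scaleR_add_left)
    qed
  qed
qed

end
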